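(* Let $n\ge1$ and let $\phi,\theta\in S_n$ be $x$--$y$ equivalent. Then the cycle graphs $Gr(\phi)$ and $Gr(\theta)$ have the same number of alternating cycles.
   Context: Permutations are written in one-line notation $\phi=\langle\phi_1\dots\phi_n\rangle$; set $\phi_0=0$. The big black cycle $\phi^{\cdot}$ is the $(n+1)$-cycle on $\{0,\dots,n\}$ with $\phi^{\cdot}(\phi_i)=\phi_{i-1}$ for $1\le i\le n$ and $\phi^{\cdot}(0)=\phi_n$, i.e. $\phi^{\cdot}=(0,\phi_n,\dots,\phi_1)$. Write $a\to b$ when $\phi^{\cdot}(a)=b$. Each $(n+1)$-cycle $(0,c_n,\dots,c_1)$ is the big black cycle of the unique permutation $\langle c_1\dots c_n\rangle$. Cycle graph $Gr(\phi)$: vertices $0,\dots,n$; black edges $a\to\phi^{\cdot}(a)$; grey edges $v\dashrightarrow v+1\pmod{n+1}$. Its edges decompose uniquely into alternating cycles, obtained by following a black edge and then a grey edge. The number of alternating cycles equals the number of cycles, fixed points included, of the map $v\mapsto\phi^{\cdot}(v)+1\pmod{n+1}$. $x$--$y$ exchange operation, for $x,y\in\{0,\dots,n\}$, with $x+1$ read as $0$ when $x=n$: if $x+1\to y$ in $\phi^{\cdot}$, remove $y$ from its place immediately after $x+1$ and reinsert it immediately before $x$. The resulting cycle is $\theta^{\cdot}$. If $y=x$, or if $x+1\to y\to x$ already holds, nothing changes. $x$--$y$ cyclic operation: if $\phi^{\cdot}$ contains $x+1\to y\to x$ (for $x=n$: $0\to y\to n$), relabel the entries of $\phi^{\cdot}$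 to obtain $\theta^{\cdot}$ as follows. If $x<n$ and $y>x+1$, replace $x+1$ by $y-1$ and each $t$ with $x+2\le t\le y-1$ by $t-1$. If $y<x$, replace $x$ by $y+1$ and each $t$ with $y+1\le t\le x-1$ by $t+1$. Two permutations are $x$--$y$ equivalent if they are related by the equivalence relation on $S_n$ generated by all $x$--$y$ exchange operations and all $x$--$y$ cyclic operations, over all $x,y$. Concretely, this means there is a finite sequence of permutations joining them in which each consecutive pair is related, in one direction or the other, by a single such operation. *)

theory Defs
  imports Main
begin

text \<open>A permutation in S_n in one-line notation, as the list [phi_1, ..., phi_n].\<close>
definition is_perm :: "nat \<Rightarrow> nat list \<Rightarrow> bool" where
  "is_perm n xs \<longleftrightarrow> length xs = n \<and> distinct xs \<and> set xs = {1..n}"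

text \<open>The big black cycle: phi_i maps to phi_(i-1) (phi_0 = 0), 0 maps to phi_n;
  identity outside {0..n}.\<close>
definition bc :: "nat list \<Rightarrow> nat \<Rightarrow> nat" where
  "bc xs a = (if a = 0 then (if xs = [] then 0 else last xs)
              else if a \<in> set xs then (0 # xs) ! (THE i. i < length xs \<and> xs ! i = a)
              else a)"

definition sucm :: "nat \<Rightarrow> nat \<Rightarrow> nat" where
  "sucm n x = (if x = n then 0 else x + 1)"

text \<open>Result of the x--y exchange operation on a cycle c on {0..n} with c (x+1) = y:
  y is moved from right after x+1 to right before x.\<close>
definition exch :: "nat \<Rightarrow> (nat \<Rightarrow> nat) \<Rightarrow> nat \<Rightarrow> nat \<Rightarrow> nat \<Rightarrow> nat" where
  "exch n c x y a =
     (if n < a then a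
      else if y = x \<or> c y = x then c a
      else if a = sucm n x then c y
      else if c a = x then y
      else if a = y then x
      else c a)"

definition exch_step :: "nat \<Rightarrow> nat list \<Rightarrow> nat list \<Rightarrow> bool" where
  "exch_step n phi theta \<longleftrightarrow> is_perm n phi \<and> is_perm n theta \<and>
     (\<exists>x\<le>n. \<exists>y\<le>n. bc phi (sucm n x) = y \<and> bc theta = exch n (bc phi) x y)"

definition relabel :: "nat \<Rightarrow> nat \<Rightarrow> nat \<Rightarrow> nat \<Rightarrow> nat" where
  "relabel n x y t =
     (if x < n \<and> x + 1 < y then
        (if t = x + 1 then y - 1 else if x + 2 \<le> t \<and> t \<le> y - 1 then t - 1 else t)
      else if y < x then
        (if t = x then y + 1 else if y + 1 \<le> t \<and> t \<le> x - 1 then t + 1 else t)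
      else t)"

definition cyc_step :: "nat \<Rightarrow> nat list \<Rightarrow> nat list \<Rightarrow> bool" where
  "cyc_step n phi theta \<longleftrightarrow> is_perm n phi \<and> is_perm n theta \<and>
     (\<exists>x\<le>n. \<exists>y\<le>n. bc phi (sucm n x) = y \<and> bc phi y = x \<and>
        (\<forall>a\<le>n. bc theta (relabel n x y a) = relabel n x y (bc phi a)))"

definition xy_step :: "nat \<Rightarrow> nat list \<Rightarrow> nat list \<Rightarrow> bool" where
  "xy_step n phi theta \<longleftrightarrow> exch_step n phi theta \<or> cyc_step n phi theta"

definition xy_equiv :: "nat \<Rightarrow> nat list \<Rightarrow> nat list \<Rightarrow> bool" where
  "xy_equiv n = (\<lambda>p q. xy_step n p q \<or> xy_step n q p)\<^sup>*\<^sup>*"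

text \<open>Number of alternating cycles of Gr(phi): the number of cycles (orbits)
  of v \<mapsto> bc phi v + 1 (mod n+1) on {0..n}.\<close>
definition alt_map :: "nat \<Rightarrow> nat list \<Rightarrow> nat \<Rightarrow> nat" where
  "alt_map n phi v = (bc phi v + 1) mod (n + 1)"

definition alt_cycles :: "nat \<Rightarrow> nat list \<Rightarrow> nat" where
  "alt_cycles n phi =
     card ((\<lambda>v. {w. \<exists>k. (alt_map n phi ^^ k) v = w}) ` {0..n})"

end

theory Submission
  imports Defs
begin

definition orb :: "('a \<Rightarrow> 'a) \<Rightarrow> 'a \<Rightarrow> 'a set" where
  "orb f v = {w. \<exists>k. (f^^k) v = w}"
definition ncyc :: "'a set \<Rightarrow> ('a \<Rightarrow> 'a) \<Rightarrow> nat" where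
  "ncyc S f = card (orb f ` S)"

lemma alt_cycles_ncyc: "alt_cycles n phi = ncyc {0..n} (alt_map n phi)"
  by (simp add: alt_cycles_def ncyc_def orb_def)

lemma funpow_in: "f ` S \<subseteq> S \<Longrightarrow> a \<in> S \<Longrightarrow> (f^^k) a \<in> S"
  by (induct k) auto

lemma orb_sub: "f ` S \<subseteq> S \<Longrightarrow> a \<in> S \<Longrightarrow> orb f a \<subseteq> S"
  using funpow_in by (auto simp: orb_def)

lemma orb_self: "v \<in> orb f v"
  unfolding orb_def by (auto intro: exI[of _ 0])

lemma orb_step: "x \<in> orb g v \<Longrightarrow> g x \<in> orb g v"
proof -
  assume "x \<in> orb g v"
  then obtain k where "(g^^k) v = x" by (auto simp: orb_def)
  then have "(g^^Suc k) v = g x" by simp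
  then show ?thesis unfolding orb_def by (intro CollectI exI)
qed

lemma orb_trans: "b \<in> orb f a \<Longrightarrow> orb f b \<subseteq> orb f a"
proof
  fix c assume "b \<in> orb f a" "c \<in> orb f b"
  then obtain k m where "(f^^k) a = b" "(f^^m) b = c" by (auto simp: orb_def)
  then have "(f^^(m+k)) a = c" by (simp add: funpow_add)
  then show "c \<in> orb f a" by (auto simp: orb_def)
qed

lemma funpow_cancel:
  assumes "inj_on f S" "f ` S \<subseteq> S" "a \<in> S"
  shows "i \<le> j \<Longrightarrow> (f^^i) a = (f^^j) a \<Longrightarrow> (f^^(j-i)) a = a"
proof (induct i arbitrary: j)
  case 0 then show ?case by simp
next
  case (Suc i)
  then obtain j' where j: "j = Suc j'" "i \<le> j'" by (cases j) auto
  have "f ((f^^i) a) = f ((f^^j') a)" using Suc.prems j by simp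
  moreover have "(f^^i) a \<in> S" "(f^^j') a \<in> S" using funpow_in assms by auto
  ultimately have "(f^^i) a = (f^^j') a" using assms(1) by (auto dest: inj_onD)
  then show ?case using Suc.hyps j by simp
qed

lemma periodic:
  assumes "finite S" "inj_on f S" "f ` S \<subseteq> S" "a \<in> S"
  shows "\<exists>m>0. (f^^m) a = a"
proof -
  have "\<exists>i j. i < j \<and> (f^^i) a = (f^^j) a"
  proof (rule ccontr)
    assume H: "\<not> (\<exists>i j. i < j \<and> (f^^i) a = (f^^j) a)"
    have "inj_on (\<lambda>k. (f^^k) a) {0..card S}"
    proof (rule inj_onI)
      fix i j assume "(f^^i) a = (f^^j) a"
      then show "i = j" using H by (metis linorder_neqE_nat)
    qed
    moreover have "(\<lambda>k. (f^^k) a) ` {0..card S} \<subseteq> S" using funpow_in[OF assms(3,4)] by blast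
    ultimately have "card {0..card S} \<le> card S" by (rule card_inj_on_le[OF _ _ assms(1)])
    then show False by simp
  qed
  then obtain i j where ij: "i < j" "(f^^i) a = (f^^j) a" by blast
  have "(f^^(j-i)) a = a" by (rule funpow_cancel[OF assms(2-4) less_imp_le[OF ij(1)] ij(2)])
  moreover have "j - i > 0" using ij(1) by simp
  ultimately show ?thesis by blast
qed

lemma funpow_mult_fix: "(f^^m) a = a \<Longrightarrow> (f^^(m*k)) a = a"
proof (induct k)
  case 0 then show ?case by simp
next
  case (Suc k)
  have "(f^^(m*Suc k)) a = (f^^m) ((f^^(m*k)) a)" by (simp add: funpow_add)
  then show ?case using Suc by simp
qed

lemma orb_sym:
  assumes "finite S" "inj_on f S" "f ` S \<subseteq> S" "a \<in> S" "b \<in> orb f a"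
  shows "a \<in> orb f b"
proof -
  obtain m where m: "m > 0" "(f^^m) a = a" using periodic[OF assms(1-4)] by blast
  obtain k where k: "(f^^k) a = b" using assms(5) by (auto simp: orb_def)
  have "k \<le> m*k" using m by simp
  then have eq: "m*k = (m*k - k) + k" by simp
  have "(f^^((m*k - k) + k)) a = (f^^(m*k - k)) ((f^^k) a)" by (simp only: funpow_add comp_apply)
  then have "(f^^(m*k - k)) ((f^^k) a) = (f^^(m*k)) a" by (simp only: eq[symmetric])
  then have "(f^^(m*k - k)) b = (f^^(m*k)) a" using k by simp
  also have "\<dots> = a" using funpow_mult_fix[where f=f and m=m and a=a and k=k] m by simp
  finally show ?thesis by (auto simp: orb_def)
qed

lemma orb_eq:
  assumes "finite S" "inj_on f S" "f ` S \<subseteq> S" "a \<in> S" "b \<in> orb f a"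
  shows "orb f b = orb f a"
proof (rule equalityI)
  show "orb f b \<subseteq> orb f a" by (rule orb_trans[OF assms(5)])
  show "orb f a \<subseteq> orb f b" by (rule orb_trans[OF orb_sym[OF assms]])
qed

lemma ncyc_cong:
  assumes "\<forall>a\<in>T. g a = g' a" "g ` T \<subseteq> T"
  shows "ncyc T g = ncyc T g'"
proof -
  have "(g^^k) v = (g'^^k) v \<and> (g^^k) v \<in> T" if "v \<in> T" for v k
    using that assms by (induct k) auto
  then have "orb g v = orb g' v" if "v \<in> T" for v using that by (auto simp: orb_def)
  then show ?thesis unfolding ncyc_def by (metis image_cong)
qed

lemma remove_orb:
  assumes fin: "finite S" and inj: "inj_on f S" and map: "f ` S \<subseteq> S"
    and u: "u \<in> S" and w: "w \<in> S" "f w = u" and fu: "f u \<noteq> u"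
    and gw: "g w = f u" and ga: "\<And>a. a \<noteq> w \<Longrightarrow> g a = f a"
    and v: "v \<in> S" "v \<noteq> u"
  shows "orb g v = orb f v - {u}"
proof
  have "(g^^k) v \<in> orb f v - {u}" for k
  proof (induct k)
    case 0 then show ?case using v orb_self by auto
  next
    case (Suc k)
    define a where "a = (g^^k) v"
    have a: "a \<in> orb f v" "a \<noteq> u" using Suc unfolding a_def by auto
    have gs: "(g^^Suc k) v = g a" unfolding a_def by simp
    show ?case
    proof (cases "a = w")
      case True
      have "u \<in> orb f v" using a True w orb_step by metis
      then have "f u \<in> orb f v" by (rule orb_step)
      then show ?thesis using True fu gs gw by simp
    next
      case False
      have "a \<in> S" using a orb_sub[OF map v(1)] by auto
      then have "f a \<noteq> u" using False w inj by (auto dest: inj_onD)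
      then show ?thesis using False a orb_step gs ga by simp
    qed
  qed
  then show "orb g v \<subseteq> orb f v - {u}" by (auto simp: orb_def)
next
  have wu: "w \<noteq> u" using w fu by auto
  have "((f^^k) v \<noteq> u \<longrightarrow> (f^^k) v \<in> orb g v) \<and> ((f^^k) v = u \<longrightarrow> w \<in> orb g v)" for k
  proof (induct k)
    case 0 then show ?case using v orb_self by auto
  next
    case (Suc k)
    define a where "a = (f^^k) v"
    have IH: "a \<noteq> u \<longrightarrow> a \<in> orb g v" "a = u \<longrightarrow> w \<in> orb g v" using Suc unfolding a_def by auto
    have fs: "(f^^Suc k) v = f a" unfolding a_def by simp
    have aS: "a \<in> S" unfolding a_def using funpow_in map v by auto
    show ?case
    proof (cases "f a = u")
      case True
      then have "a = w" using w inj aS by (auto dest: inj_onD)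
      then have "w \<in> orb g v" using IH wu by simp
      then show ?thesis using fs True by simp
    next
      case False
      show ?thesis
      proof (cases "a = u")
        case True
        then have "g w \<in> orb g v" using IH orb_step by metis
        then show ?thesis using True False fs gw by simp
      next
        case F2: False
        have "a \<noteq> w" using False w by auto
        then have "g a \<in> orb g v" using IH F2 orb_step by metis
        then show ?thesis using F2 False \<open>a \<noteq> w\<close> fs ga by simp
      qed
    qed
  qed
  then show "orb f v - {u} \<subseteq> orb g v" by (auto simp: orb_def)
qed

lemma ncyc_remove:
  assumes fin: "finite S" and inj: "inj_on f S" and map: "f ` S \<subseteq> S"
    and u: "u \<in> S" and w: "w \<in> S" "f w = u" and fu: "f u \<noteq> u"
    and gw: "g w = f u" and ga: "\<And>a. a \<noteq> w \<Longrightarrow> g a = f a"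
  shows "ncyc (S - {u}) g = ncyc S f" "g ` (S - {u}) \<subseteq> S - {u}"
proof -
  have wu: "w \<noteq> u" using w fu by auto
  have ro: "orb g v = orb f v - {u}" if "v \<in> S - {u}" for v
    using remove_orb[OF assms] that by blast
  have 1: "orb g ` (S - {u}) = (\<lambda>A. A - {u}) ` (orb f ` (S - {u}))"
    unfolding image_image using ro by (rule image_cong[OF refl])
  have "u \<in> orb f w" using w orb_step orb_self by metis
  then have ou: "orb f u = orb f w" by (rule orb_eq[OF fin inj map w(1)])
  have 2: "orb f ` (S - {u}) = orb f ` S"
  proof
    show "orb f ` (S - {u}) \<subseteq> orb f ` S" by (rule image_mono) blast
    show "orb f ` S \<subseteq> orb f ` (S - {u})"
    proof
      fix A assume "A \<in> orb f ` S"
      then obtain a where a: "a \<in> S" "A = orb f a" by blast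
      show "A \<in> orb f ` (S - {u})"
      proof (cases "a = u")
        case True
        then have "A = orb f w" using a ou by simp
        then show ?thesis using w wu by blast
      next
        case False then show ?thesis using a by blast
      qed
    qed
  qed
  have 3: "inj_on (\<lambda>A. A - {u}) (orb f ` (S - {u}))"
  proof (rule inj_onI)
    fix A B assume "A \<in> orb f ` (S - {u})" "B \<in> orb f ` (S - {u})" "A - {u} = B - {u}"
    then obtain a b where ab: "a \<in> S" "a \<noteq> u" "b \<in> S" "b \<noteq> u" "A = orb f a" "B = orb f b" by blast
    have "a \<in> A - {u}" using ab orb_self[of a f] by simp
    then have "a \<in> B" using \<open>A - {u} = B - {u}\<close> by blast
    then have "orb f a = orb f b" using orb_eq[OF fin inj map ab(3)] ab by blast
    then show "A = B" using ab by simp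
  qed
  show "ncyc (S - {u}) g = ncyc S f" unfolding ncyc_def 1 using card_image[OF 3] 2 by simp
  show "g ` (S - {u}) \<subseteq> S - {u}"
  proof
    fix b assume "b \<in> g ` (S - {u})"
    then obtain a where a: "a \<in> S - {u}" "b = g a" by blast
    have "b \<in> orb g a" using a(2) orb_step orb_self by metis
    also have "\<dots> = orb f a - {u}" using ro[OF a(1)] .
    finally show "b \<in> S - {u}" using orb_sub[OF map] a(1) by blast
  qed
qed

lemma ncyc_move:
  assumes fin: "finite S" and inj: "inj_on f S" and map: "f ` S \<subseteq> S"
    and inj': "inj_on f' S" and map': "f' ` S \<subseteq> S"
    and u: "u \<in> S" and w: "w \<in> S" "f w = u" and fu: "f u \<noteq> u"
    and w': "w' \<in> S" "f' w' = u" and fu': "f' u \<noteq> u"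
    and agree: "\<And>a. a \<in> S \<Longrightarrow> a \<noteq> u \<Longrightarrow> (if a = w then f u else f a) = (if a = w' then f' u else f' a)"
  shows "ncyc S f = ncyc S f'"
proof -
  let ?g = "\<lambda>a. if a = w then f u else f a"
  let ?g' = "\<lambda>a. if a = w' then f' u else f' a"
  have r1: "ncyc (S - {u}) ?g = ncyc S f" "?g ` (S - {u}) \<subseteq> S - {u}"
    by (rule ncyc_remove[OF fin inj map u w fu], simp, simp)+
  have r2: "ncyc (S - {u}) ?g' = ncyc S f'"
    by (rule ncyc_remove[OF fin inj' map' u w' fu'], simp, simp)
  have "ncyc (S - {u}) ?g = ncyc (S - {u}) ?g'"
    by (rule ncyc_cong[OF _ r1(2)]) (use agree in blast)
  then show ?thesis using r1(1) r2 by simp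
qed

lemma ncyc_conj:
  assumes inj: "inj_on r S" and rS: "r ` S = S" and g: "g ` S \<subseteq> S"
    and comm: "\<And>a. a \<in> S \<Longrightarrow> r (g a) = f (r a)"
  shows "ncyc S f = ncyc S g"
proof -
  have it: "(f^^k) (r a) = r ((g^^k) a) \<and> (g^^k) a \<in> S" if "a \<in> S" for a k
  proof (induct k)
    case 0 then show ?case using that by simp
  next
    case (Suc k)
    then show ?case using comm g by auto
  qed
  have o: "orb f (r a) = r ` orb g a" if "a \<in> S" for a
    using it[OF that] by (auto simp: orb_def)
  have "orb f ` S = orb f ` r ` S" using rS by simp
  also have "\<dots> = (image r) ` (orb g ` S)" unfolding image_image using o by (rule image_cong[OF refl])
  finally have e: "orb f ` S = (image r) ` (orb g ` S)" .
  have "inj_on (image r) (orb g ` S)"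
  proof (rule inj_onI)
    fix A B assume "A \<in> orb g ` S" "B \<in> orb g ` S" "r ` A = r ` B"
    then show "A = B" using inj orb_sub[OF g] inj_on_image_eq_iff by (metis imageE)
  qed
  then show ?thesis unfolding ncyc_def e by (simp add: card_image)
qed

lemma perm_L:
  assumes "is_perm n xs"
  shows "length (0#xs) = n+1" "distinct (0#xs)" "set (0#xs) = {0..n}"
proof -
  have h: "length xs = n" "distinct xs" "set xs = {1..n}" using assms by (auto simp: is_perm_def)
  show "length (0#xs) = n+1" using h by simp
  show "distinct (0#xs)" using h by auto
  show "set (0#xs) = {0..n}" using h by auto
qed

lemma bc_nth:
  assumes p: "is_perm n xs" and n: "n \<ge> 1" and j: "j \<le> n"
  shows "bc xs ((0#xs)!j) = (if j = 0 then (0#xs)!n else (0#xs)!(j-1))"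
proof (cases j)
  case 0
  have h: "length xs = n" using p by (simp add: is_perm_def)
  then have ne: "xs \<noteq> []" using n by auto
  have "last xs = xs ! (n - 1)" using last_conv_nth[OF ne] h by simp
  also have "\<dots> = (0#xs) ! n" using n by (cases n) auto
  finally show ?thesis using 0 ne by (simp add: bc_def)
next
  case (Suc i)
  have h: "length xs = n" "distinct xs" "set xs = {1..n}" using p by (auto simp: is_perm_def)
  have i: "i < length xs" using Suc j h by simp
  have a0: "xs ! i \<noteq> 0" using nth_mem[OF i] h by auto
  have "(THE i'. i' < length xs \<and> xs ! i' = xs ! i) = i"
    using i h(2) by (auto intro!: the_equality simp: nth_eq_iff_index_eq)
  then have "bc xs (xs ! i) = (0#xs) ! i" using a0 nth_mem[OF i] by (simp add: bc_def)
  then show ?thesis using Suc by simp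
qed

lemma in_L:
  assumes "is_perm n xs" "a \<le> n"
  obtains j where "j \<le> n" "a = (0#xs)!j"
proof -
  have "a \<in> set (0#xs)" using perm_L(3)[OF assms(1)] assms(2) by simp
  then obtain j where "j < length (0#xs)" "(0#xs)!j = a" unfolding in_set_conv_nth by blast
  moreover have "j \<le> n" using \<open>j < length (0#xs)\<close> perm_L(1)[OF assms(1)] by simp
  ultimately show ?thesis using that by blast
qed

lemma bc_props:
  assumes p: "is_perm n xs" and n: "n \<ge> 1"
  shows "inj_on (bc xs) {0..n}" "bc xs ` {0..n} \<subseteq> {0..n}" "bc xs ` {0..n} = {0..n}"
    "\<And>a. a \<le> n \<Longrightarrow> bc xs a \<noteq> a"
proof -
  let ?L = "0#xs"
  define pr where "pr j = (if j = 0 then n else j - 1)" for j :: nat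
  have bcj: "bc xs (?L!j) = ?L!(pr j)" if "j \<le> n" for j
    using bc_nth[OF p n that] by (simp add: pr_def)
  have L: "length ?L = n+1" "distinct ?L" "set ?L = {0..n}" using perm_L[OF p] by auto
  have eqi: "?L!i = ?L!k \<longleftrightarrow> i = k" if "i \<le> n" "k \<le> n" for i k
    using nth_eq_iff_index_eq[OF L(2)] that L(1) by simp
  have prn: "pr j \<le> n" if "j \<le> n" for j using that unfolding pr_def by auto
  show inj: "inj_on (bc xs) {0..n}"
  proof (rule inj_onI)
    fix a b assume ab: "a \<in> {0..n}" "b \<in> {0..n}" "bc xs a = bc xs b"
    obtain j where j: "j \<le> n" "a = ?L!j" using in_L[OF p] ab(1) by auto
    obtain k where k: "k \<le> n" "b = ?L!k" using in_L[OF p] ab(2) by auto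
    have "?L!(pr j) = ?L!(pr k)" using ab(3) bcj j k by simp
    then have "pr j = pr k" using eqi[OF prn[OF j(1)] prn[OF k(1)]] by simp
    then have "j = k" using j k n unfolding pr_def by (auto split: if_splits)
    then show "a = b" using j k by simp
  qed
  show map: "bc xs ` {0..n} \<subseteq> {0..n}"
  proof
    fix b assume "b \<in> bc xs ` {0..n}"
    then obtain a where a: "a \<le> n" "b = bc xs a" by auto
    obtain j where j: "j \<le> n" "a = ?L!j" using in_L[OF p a(1)] by auto
    have "b = ?L!(pr j)" using a j bcj by simp
    then show "b \<in> {0..n}" using L prn[OF j(1)] by (metis nth_mem less_Suc_eq_le Suc_eq_plus1)
  qed
  show "bc xs ` {0..n} = {0..n}" by (rule endo_inj_surj[OF _ map inj]) simp
  fix a assume a: "a \<le> n"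
  obtain j where j: "j \<le> n" "a = ?L!j" using in_L[OF p a] by auto
  have "pr j \<noteq> j" using n unfolding pr_def by auto
  then show "bc xs a \<noteq> a" using j bcj[OF j(1)] eqi[OF prn[OF j(1)] j(1)] by simp
qed

lemma sucm_props:
  shows "inj_on (sucm n) {0..n}" "\<And>b. b \<le> n \<Longrightarrow> sucm n b \<le> n"
  unfolding sucm_def by (auto intro!: inj_onI split: if_splits)

lemma alt_map_eq: "is_perm n xs \<Longrightarrow> n \<ge> 1 \<Longrightarrow> a \<le> n \<Longrightarrow> alt_map n xs a = sucm n (bc xs a)"
proof -
  assume p: "is_perm n xs" "n \<ge> 1" "a \<le> n"
  have b: "bc xs a \<le> n" using bc_props(2)[OF p(1,2)] p(3) by (auto simp: image_subset_iff)
  show ?thesis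
  proof (cases "bc xs a = n")
    case True then show ?thesis by (simp add: alt_map_def sucm_def)
  next
    case False then show ?thesis using b by (simp add: alt_map_def sucm_def)
  qed
qed

lemma alt_props:
  assumes p: "is_perm n xs" and n: "n \<ge> 1"
  shows "inj_on (alt_map n xs) {0..n}" "alt_map n xs ` {0..n} \<subseteq> {0..n}"
proof -
  have e: "alt_map n xs a = sucm n (bc xs a)" if "a \<in> {0..n}" for a using alt_map_eq[OF p n] that by simp
  have bS: "bc xs a \<in> {0..n}" if "a \<in> {0..n}" for a using bc_props(2)[OF p n] that by (auto simp: image_subset_iff)
  show "inj_on (alt_map n xs) {0..n}"
  proof (rule inj_onI)
    fix a b assume ab: "a \<in> {0..n}" "b \<in> {0..n}" "alt_map n xs a = alt_map n xs b"
    then have "sucm n (bc xs a) = sucm n (bc xs b)" using e by simp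
    then show "a = b" using inj_onD[OF sucm_props(1)[of n] _ bS[OF ab(1)] bS[OF ab(2)]] inj_onD[OF bc_props(1)[OF p n] _ ab(1,2)] by blast
  qed
  show "alt_map n xs ` {0..n} \<subseteq> {0..n}" using e bS sucm_props(2) by auto
qed

lemma sucm_inj: "a \<le> n \<Longrightarrow> b \<le> n \<Longrightarrow> sucm n a = sucm n b \<Longrightarrow> a = b"
  unfolding sucm_def by (auto split: if_splits)

lemma bc_le: "is_perm n xs \<Longrightarrow> n \<ge> 1 \<Longrightarrow> a \<le> n \<Longrightarrow> bc xs a \<le> n"
  using bc_props(2) by (auto simp: image_subset_iff)

lemma bc_inj: "is_perm n xs \<Longrightarrow> n \<ge> 1 \<Longrightarrow> a \<le> n \<Longrightarrow> b \<le> n \<Longrightarrow> bc xs a = bc xs b \<Longrightarrow> a = b"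
  using inj_onD[OF bc_props(1)[of n xs]] by simp

lemma bc_surj: "is_perm n xs \<Longrightarrow> n \<ge> 1 \<Longrightarrow> x \<le> n \<Longrightarrow> \<exists>w\<le>n. bc xs w = x"
  using bc_props(3)[of n xs] by (metis atLeastAtMost_iff imageE zero_le)

lemma exch_inv:
  assumes p: "is_perm n phi" and q: "is_perm n theta" and n: "n \<ge> 1"
    and x: "x \<le> n" and y: "y \<le> n" and cu: "bc phi (sucm n x) = y"
    and d: "bc theta = exch n (bc phi) x y"
  shows "ncyc {0..n} (alt_map n phi) = ncyc {0..n} (alt_map n theta)"
proof -
  let ?c = "bc phi"
  let ?d = "bc theta"
  let ?u = "sucm n x"
  have uS: "?u \<le> n" using sucm_props(2)[OF x] .
  have fe: "alt_map n phi a = sucm n (?c a)" if "a \<le> n" for a using alt_map_eq[OF p n that] .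
  have fe': "alt_map n theta a = sucm n (?d a)" if "a \<le> n" for a using alt_map_eq[OF q n that] .
  have cy: "?c y \<le> n" using bc_le[OF p n y] .
  show ?thesis
  proof (cases "y = x \<or> ?c y = x")
    case True
    have "?d a = ?c a" if "a \<le> n" for a using True that d by (simp add: exch_def)
    then have "\<forall>a\<in>{0..n}. alt_map n phi a = alt_map n theta a" using fe fe' by simp
    then show ?thesis using ncyc_cong alt_props(2)[OF p n] by blast
  next
    case False
    obtain w where w: "w \<le> n" "?c w = x" using bc_surj[OF p n x] by blast
    have wy: "w \<noteq> y" using w False by auto
    have wu: "w \<noteq> ?u" using w False cu by auto
    have cwx: "?c a = x \<longleftrightarrow> a = w" if "a \<le> n" for a using bc_inj[OF p n that w(1)] w by auto
    have dg: "?d a = (if a = ?u then ?c y else if a = w then y else if a = y then x else ?c a)"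
      if "a \<le> n" for a using d that False cwx[OF that] by (simp add: exch_def)
    have yu: "y \<noteq> ?u" using bc_props(4)[OF p n uS] cu by auto
    show ?thesis
    proof (rule ncyc_move[where u="?u" and w=w and w'=y])
      show "finite {0..n}" by simp
      show "inj_on (alt_map n phi) {0..n}" "alt_map n phi ` {0..n} \<subseteq> {0..n}" using alt_props[OF p n] by auto
      show "inj_on (alt_map n theta) {0..n}" "alt_map n theta ` {0..n} \<subseteq> {0..n}" using alt_props[OF q n] by auto
      show "?u \<in> {0..n}" "w \<in> {0..n}" "y \<in> {0..n}" using uS w y by auto
      show "alt_map n phi w = ?u" using fe[OF w(1)] w by simp
      show "alt_map n phi ?u \<noteq> ?u" using fe[OF uS] cu sucm_inj[OF y x] False by auto
      show "alt_map n theta y = ?u" using fe'[OF y] dg[OF y] yu wy by simp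
      show "alt_map n theta ?u \<noteq> ?u" using fe'[OF uS] dg[OF uS] sucm_inj[OF cy x] False by auto
      fix a assume a: "a \<in> {0..n}" "a \<noteq> ?u"
      then have a': "a \<le> n" by simp
      show "(if a = w then alt_map n phi ?u else alt_map n phi a) =
            (if a = y then alt_map n theta ?u else alt_map n theta a)"
        using fe[OF a'] fe'[OF a'] fe[OF uS] fe'[OF uS] dg[OF a'] dg[OF uS] a(2) wy cu by auto
    qed
  qed
qed

lemma cyc_generic:
  assumes p: "is_perm n phi" and q: "is_perm n theta" and n: "n \<ge> 1"
    and r_inj: "inj_on r {0..n}" and r_map: "\<And>t. t \<le> n \<Longrightarrow> r t \<le> n"
    and h_map: "\<And>t. t \<le> n \<Longrightarrow> h t \<le> n"
    and rh: "\<And>t. t \<le> n \<Longrightarrow> r (h t) = sucm n (r t)"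
    and dr: "\<And>a. a \<le> n \<Longrightarrow> bc theta (r a) = r (bc phi a)"
  shows "ncyc {0..n} (alt_map n theta) = ncyc {0..n} (\<lambda>a. h (bc phi a))"
    "inj_on (\<lambda>a. h (bc phi a)) {0..n}" "(\<lambda>a. h (bc phi a)) ` {0..n} \<subseteq> {0..n}"
proof -
  have rmap: "r ` {0..n} \<subseteq> {0..n}" using r_map by auto
  have rS: "r ` {0..n} = {0..n}" by (rule endo_inj_surj[OF _ rmap r_inj]) simp
  show gmap: "(\<lambda>a. h (bc phi a)) ` {0..n} \<subseteq> {0..n}" using h_map bc_le[OF p n] by auto
  have comm: "r (h (bc phi a)) = alt_map n theta (r a)" if "a \<in> {0..n}" for a
  proof -
    have a: "a \<le> n" using that by simp
    have "r (h (bc phi a)) = sucm n (r (bc phi a))" using rh bc_le[OF p n a] by simp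
    also have "\<dots> = sucm n (bc theta (r a))" using dr[OF a] by simp
    also have "\<dots> = alt_map n theta (r a)" using alt_map_eq[OF q n r_map[OF a]] by simp
    finally show ?thesis .
  qed
  show "ncyc {0..n} (alt_map n theta) = ncyc {0..n} (\<lambda>a. h (bc phi a))"
    by (rule ncyc_conj[OF r_inj rS gmap]) (use comm in simp)
  show "inj_on (\<lambda>a. h (bc phi a)) {0..n}"
  proof (rule inj_onI)
    fix a b assume ab: "a \<in> {0..n}" "b \<in> {0..n}" "h (bc phi a) = h (bc phi b)"
    then have "alt_map n theta (r a) = alt_map n theta (r b)" using comm by metis
    moreover have "r a \<in> {0..n}" "r b \<in> {0..n}" using ab r_map by auto
    ultimately have "r a = r b" using inj_onD[OF alt_props(1)[OF q n]] by blast
    then show "a = b" using inj_onD[OF r_inj] ab by blast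
  qed
qed

lemma relabel_A2:
  assumes "x < n" "x + 3 \<le> y" "y \<le> n"
  shows "\<And>t. t \<le> n \<Longrightarrow> relabel n x y t \<le> n" "inj_on (relabel n x y) {0..n}"
    "\<And>t. t \<le> n \<Longrightarrow> relabel n x y ((\<lambda>t. if t = x then x+2 else if t = x+1 then y else if t = y-1 then x+1 else sucm n t) t)
        = sucm n (relabel n x y t)"
  using assms by (auto simp: relabel_def sucm_def inj_on_def split: if_splits)

lemma relabel_B2:
  assumes "y + 2 \<le> x" "x \<le> n"
  shows "\<And>t. t \<le> n \<Longrightarrow> relabel n x y t \<le> n" "inj_on (relabel n x y) {0..n}"
    "\<And>t. t \<le> n \<Longrightarrow> relabel n x y ((\<lambda>t. if t = y then x else if t = x-1 then sucm n x else if t = x then y+1 else sucm n t) t)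
        = sucm n (relabel n x y t)"
  using assms by (auto simp: relabel_def sucm_def inj_on_def split: if_splits)

lemma cyc_inv:
  assumes p: "is_perm n phi" and q: "is_perm n theta" and n: "n \<ge> 1"
    and x: "x \<le> n" and y: "y \<le> n" and cu: "bc phi (sucm n x) = y" and cy: "bc phi y = x"
    and dr: "\<And>a. a \<le> n \<Longrightarrow> bc theta (relabel n x y a) = relabel n x y (bc phi a)"
  shows "ncyc {0..n} (alt_map n phi) = ncyc {0..n} (alt_map n theta)"
proof -
  let ?c = "bc phi"
  let ?u = "sucm n x"
  let ?r = "relabel n x y"
  have uS: "?u \<le> n" using sucm_props(2)[OF x] .
  have fe: "alt_map n phi a = sucm n (?c a)" if "a \<le> n" for a using alt_map_eq[OF p n that] .
  have cinv: "?c a = b \<longleftrightarrow> a = w" if "a \<le> n" "w \<le> n" "?c w = b" for a b w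
    using bc_inj[OF p n that(1,2)] that(3) by auto
  have idcase: ?thesis if rid: "\<And>t. ?r t = t"
  proof -
    have "bc theta a = ?c a" if "a \<le> n" for a using dr[OF that] rid by simp
    then have "\<forall>a\<in>{0..n}. alt_map n phi a = alt_map n theta a"
      using fe alt_map_eq[OF q n] by simp
    then show ?thesis using ncyc_cong alt_props(2)[OF p n] by blast
  qed
  show ?thesis
  proof (cases "x < n \<and> x + 1 < y")
    case A: True
    show ?thesis
    proof (cases "y = x + 2")
      case True
      then show ?thesis using A by (intro idcase) (auto simp: relabel_def)
    next
      case False
      then have A2: "x < n" "x + 3 \<le> y" using A by auto
      define h where "h = (\<lambda>t. if t = x then x+2 else if t = x+1 then y else if t = y-1 then x+1 else sucm n t)"
      have u1: "?u = x + 1" using A2 by (simp add: sucm_def)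
      note R = relabel_A2[OF A2 y]
      have R3: "?r (h t) = sucm n (?r t)" if "t \<le> n" for t unfolding h_def by (rule R(3)[OF that])
      have hmap: "h t \<le> n" if "t \<le> n" for t using that A2 y by (auto simp: h_def sucm_def)
      note G = cyc_generic[OF p q n R(2) R(1) hmap R3 dr]
      obtain q' where q': "q' \<le> n" "?c q' = y - 1" using bc_surj[OF p n, of "y-1"] y by (metis diff_le_self le_trans)
      obtain p' where p': "p' \<le> n" "?c p' = x + 1" using bc_surj[OF p n, of "x+1"] A2 by (metis Suc_eq_plus1 Suc_leI)
      have "ncyc {0..n} (alt_map n phi) = ncyc {0..n} (\<lambda>a. h (?c a))"
      proof (rule ncyc_move[where u=y and w=q' and w'=p'])
        show "finite {0..n}" by simp
        show "inj_on (alt_map n phi) {0..n}" "alt_map n phi ` {0..n} \<subseteq> {0..n}" using alt_props[OF p n] by auto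
        show "inj_on (\<lambda>a. h (?c a)) {0..n}" "(\<lambda>a. h (?c a)) ` {0..n} \<subseteq> {0..n}" using G by auto
        show "y \<in> {0..n}" "q' \<in> {0..n}" "p' \<in> {0..n}" using y q' p' by auto
        show "alt_map n phi q' = y" using fe[OF q'(1)] q' A2 y by (simp add: sucm_def)
        show "alt_map n phi y \<noteq> y" using fe[OF y] cy A2 by (simp add: sucm_def)
        show "h (?c p') = y" using p' by (simp add: h_def)
        show "h (?c y) \<noteq> y" using cy A2 by (simp add: h_def)
        fix a assume a: "a \<in> {0..n}" "a \<noteq> y"
        then have a': "a \<le> n" by simp
        have e1: "?c a = x \<longleftrightarrow> a = y" using cinv[OF a' y cy] .
        have e2: "?c a = x + 1 \<longleftrightarrow> a = p'" using cinv[OF a' p'] .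
        have e3: "?c a = y - 1 \<longleftrightarrow> a = q'" using cinv[OF a' q'] .
        have pq: "p' \<noteq> q'" using p' q' A2 by auto
        show "(if a = q' then alt_map n phi y else alt_map n phi a) =
              (if a = p' then h (?c y) else h (?c a))"
          using fe[OF a'] fe[OF y] cy e1 e2 e3 pq a(2) A2 y by (auto simp: h_def sucm_def)
      qed
      then show ?thesis using G(1) by simp
    qed
  next
    case nA: False
    show ?thesis
    proof (cases "y < x")
      case B: True
      show ?thesis
      proof (cases "x = y + 1")
        case True
        then show ?thesis using B by (intro idcase) (auto simp: relabel_def)
      next
        case False
        then have B2: "y + 2 \<le> x" using B by auto
        define h where "h = (\<lambda>t. if t = y then x else if t = x-1 then sucm n x else if t = x then y+1 else sucm n t)"
        note R = relabel_B2[OF B2 x]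
      have R3: "?r (h t) = sucm n (?r t)" if "t \<le> n" for t unfolding h_def by (rule R(3)[OF that])
        have hmap: "h t \<le> n" if "t \<le> n" for t using that B2 x by (auto simp: h_def sucm_def)
        note G = cyc_generic[OF p q n R(2) R(1) hmap R3 dr]
        obtain p' where p': "p' \<le> n" "?c p' = x - 1" using bc_surj[OF p n, of "x-1"] x by (metis diff_le_self le_trans)
        have "ncyc {0..n} (alt_map n phi) = ncyc {0..n} (\<lambda>a. h (?c a))"
        proof (rule ncyc_move[where u="?u" and w=y and w'=p'])
          show "finite {0..n}" by simp
          show "inj_on (alt_map n phi) {0..n}" "alt_map n phi ` {0..n} \<subseteq> {0..n}" using alt_props[OF p n] by auto
          show "inj_on (\<lambda>a. h (?c a)) {0..n}" "(\<lambda>a. h (?c a)) ` {0..n} \<subseteq> {0..n}" using G by auto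
          show "?u \<in> {0..n}" "y \<in> {0..n}" "p' \<in> {0..n}" using uS y p' by auto
          show "alt_map n phi y = ?u" using fe[OF y] cy by simp
          show "alt_map n phi ?u \<noteq> ?u" using fe[OF uS] cu B2 x by (simp add: sucm_def)
          have "x - 1 \<noteq> y" using B2 by simp
          then show "h (?c p') = ?u" using p' by (simp add: h_def)
          show "h (?c ?u) \<noteq> ?u" using cu B2 by (simp add: h_def sucm_def)
          fix a assume a: "a \<in> {0..n}" "a \<noteq> ?u"
          then have a': "a \<le> n" by simp
          have e1: "?c a = y \<longleftrightarrow> a = ?u" using cinv[OF a' uS cu] .
          have e2: "?c a = x - 1 \<longleftrightarrow> a = p'" using cinv[OF a' p'] .
          have e3: "?c a = x \<longleftrightarrow> a = y" using cinv[OF a' y cy] .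
          have yp: "y \<noteq> p'" using p' cy B2 by auto
          show "(if a = y then alt_map n phi ?u else alt_map n phi a) =
                (if a = p' then h (?c ?u) else h (?c a))"
            using fe[OF a'] fe[OF uS] cu e1 e2 e3 yp a(2) B2 x by (auto simp: h_def sucm_def)
        qed
        then show ?thesis using G(1) by simp
      qed
    next
      case nB: False
      have "?c ?u = ?u \<or> ?c y = y"
      proof (cases "y = x")
        case True then show ?thesis using cy by simp
      next
        case False
        then have "x < n" "y = x + 1" using nA nB x y by auto
        then show ?thesis using cu by (simp add: sucm_def)
      qed
      then show ?thesis using bc_props(4)[OF p n] uS y by blast
    qed
  qed
qed

lemma step_inv:
  assumes "xy_step n phi theta" "n \<ge> 1"
  shows "alt_cycles n phi = alt_cycles n theta"
  using assms exch_inv cyc_inv unfolding xy_step_def exch_step_def cyc_step_def alt_cycles_ncyc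
  by metis

theorem mainTheorem3:
  assumes "n \<ge> 1" and "is_perm n phi" and "is_perm n theta"
    and "xy_equiv n phi theta"
  shows "alt_cycles n phi = alt_cycles n theta"
proof -
  have "(\<lambda>p q. xy_step n p q \<or> xy_step n q p)\<^sup>*\<^sup>* phi theta" using assms(4) by (simp add: xy_equiv_def)
  then show ?thesis
  proof (induct rule: rtranclp_induct)
    case base then show ?case by simp
  next
    case (step b c)
    then show ?case using step_inv[OF _ assms(1)] by metis
  qed
qed

end
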